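(* Let $R$ be a ring, $M$ a right $R$-module, and $I$ a two-sided ideal of $R$ with $I\subseteq \mathrm{Ann}_R(M)$ (so $M$ is naturally a right $R/I$-module via $m(r+I)=mr$). If $M$ is an $\aleph_0$-injective $R$-module, then $M$ is an $\aleph_0$-injective $R/I$-module. Conversely, if $R$ is right fully idempotent and $M$ is an $\aleph_0$-injective $R/I$-module, then $M$ is an $\aleph_0$-injective $R$-module.
   Context: Rings are associative with identity; modules are unitary right modules. A right $S$-module $M$ is $\aleph_0$-injective if for every countably generated right ideal $J$ of $S$ and every $S$-homomorphism $f:J\to M$ there is an $S$-homomorphism $\bar f:S\to M$ with $\bar f|_J=f$. A ring $R$ is right fully idempotent if every right ideal $J$ of $R$ satisfies $J^2=J$. *)

theory Defs
  imports "HOL-Algebra.Algebra"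
begin

text \<open>A right module over a (not necessarily commutative) ring S:
  M supplies the additive abelian group (only carrier, addition, zero are used),
  act m r is the scalar action m r.\<close>
definition right_module ::
  "('r, 'c) ring_scheme \<Rightarrow> ('m, 'd) ring_scheme \<Rightarrow> ('m \<Rightarrow> 'r \<Rightarrow> 'm) \<Rightarrow> bool" where
  "right_module S M act \<longleftrightarrow> ring S \<and> abelian_group M \<and>
     (\<forall>m\<in>carrier M. \<forall>r\<in>carrier S. act m r \<in> carrier M) \<and>
     (\<forall>m\<in>carrier M. \<forall>n\<in>carrier M. \<forall>r\<in>carrier S. act (m \<oplus>\<^bsub>M\<^esub> n) r = act m r \<oplus>\<^bsub>M\<^esub> act n r) \<and>
     (\<forall>m\<in>carrier M. \<forall>r\<in>carrier S. \<forall>s\<in>carrier S. act m (r \<oplus>\<^bsub>S\<^esub> s) = act m r \<oplus>\<^bsub>M\<^esub> act m s) \<and>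
     (\<forall>m\<in>carrier M. \<forall>r\<in>carrier S. \<forall>s\<in>carrier S. act m (r \<otimes>\<^bsub>S\<^esub> s) = act (act m r) s) \<and>
     (\<forall>m\<in>carrier M. act m \<one>\<^bsub>S\<^esub> = m)"

definition right_ideal :: "('r, 'c) ring_scheme \<Rightarrow> 'r set \<Rightarrow> bool" where
  "right_ideal S J \<longleftrightarrow> additive_subgroup J S \<and> (\<forall>a\<in>J. \<forall>x\<in>carrier S. a \<otimes>\<^bsub>S\<^esub> x \<in> J)"

definition gen_right_ideal :: "('r, 'c) ring_scheme \<Rightarrow> 'r set \<Rightarrow> 'r set" where
  "gen_right_ideal S Y = {y. \<forall>L. right_ideal S L \<and> Y \<subseteq> L \<longrightarrow> y \<in> L}"

definition countably_generated_right_ideal :: "('r, 'c) ring_scheme \<Rightarrow> 'r set \<Rightarrow> bool" where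
  "countably_generated_right_ideal S J \<longleftrightarrow>
     right_ideal S J \<and> (\<exists>Y. countable Y \<and> Y \<subseteq> carrier S \<and> J = gen_right_ideal S Y)"

definition rmod_hom ::
  "('r, 'c) ring_scheme \<Rightarrow> ('m, 'd) ring_scheme \<Rightarrow> ('m \<Rightarrow> 'r \<Rightarrow> 'm) \<Rightarrow> 'r set \<Rightarrow> ('r \<Rightarrow> 'm) \<Rightarrow> bool" where
  "rmod_hom S M act J f \<longleftrightarrow>
     (\<forall>x\<in>J. f x \<in> carrier M) \<and>
     (\<forall>x\<in>J. \<forall>y\<in>J. f (x \<oplus>\<^bsub>S\<^esub> y) = f x \<oplus>\<^bsub>M\<^esub> f y) \<and>
     (\<forall>x\<in>J. \<forall>r\<in>carrier S. f (x \<otimes>\<^bsub>S\<^esub> r) = act (f x) r)"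

definition aleph0_injective ::
  "('r, 'c) ring_scheme \<Rightarrow> ('m, 'd) ring_scheme \<Rightarrow> ('m \<Rightarrow> 'r \<Rightarrow> 'm) \<Rightarrow> bool" where
  "aleph0_injective S M act \<longleftrightarrow>
     (\<forall>J f. countably_generated_right_ideal S J \<and> rmod_hom S M act J f \<longrightarrow>
        (\<exists>g. rmod_hom S M act (carrier S) g \<and> (\<forall>x\<in>J. g x = f x)))"

definition annihilator ::
  "('r, 'c) ring_scheme \<Rightarrow> ('m, 'd) ring_scheme \<Rightarrow> ('m \<Rightarrow> 'r \<Rightarrow> 'm) \<Rightarrow> 'r set" where
  "annihilator S M act = {r \<in> carrier S. \<forall>m\<in>carrier M. act m r = \<zero>\<^bsub>M\<^esub>}"

definition ideal_square :: "('r, 'c) ring_scheme \<Rightarrow> 'r set \<Rightarrow> 'r set" where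
  "ideal_square S J = {x. \<exists>(n::nat) a b. (\<forall>i<n. a i \<in> J \<and> b i \<in> J) \<and>
      x = finsum S (\<lambda>i. a i \<otimes>\<^bsub>S\<^esub> b i) {..<n}}"

definition right_fully_idempotent :: "('r, 'c) ring_scheme \<Rightarrow> bool" where
  "right_fully_idempotent S \<longleftrightarrow> (\<forall>J. right_ideal S J \<longrightarrow> ideal_square S J = J)"

text \<open>Induced action of R/I on M: m (r + I) = m r (well defined when I \<subseteq> Ann(M)).\<close>
definition quot_act :: "('m \<Rightarrow> 'r \<Rightarrow> 'm) \<Rightarrow> 'm \<Rightarrow> 'r set \<Rightarrow> 'm" where
  "quot_act act m C = act m (SOME r. r \<in> C)"

end

theory Submission imports Defs begin

lemma right_idealI':
  assumes R: "ring S" and sub: "J \<subseteq> carrier S" and z: "\<zero>\<^bsub>S\<^esub> \<in> J"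
    and add: "\<And>a b. a \<in> J \<Longrightarrow> b \<in> J \<Longrightarrow> a \<oplus>\<^bsub>S\<^esub> b \<in> J"
    and mul: "\<And>a x. a \<in> J \<Longrightarrow> x \<in> carrier S \<Longrightarrow> a \<otimes>\<^bsub>S\<^esub> x \<in> J"
  shows "right_ideal S J"
proof -
  interpret ring S by (rule R)
  have neg: "\<ominus>\<^bsub>S\<^esub> a \<in> J" if "a \<in> J" for a
  proof -
    have a: "a \<in> carrier S" using that sub by blast
    have "a \<otimes>\<^bsub>S\<^esub> (\<ominus>\<^bsub>S\<^esub> \<one>\<^bsub>S\<^esub>) \<in> J" using mul[OF that] by simp
    moreover have "a \<otimes>\<^bsub>S\<^esub> (\<ominus>\<^bsub>S\<^esub> \<one>\<^bsub>S\<^esub>) = \<ominus>\<^bsub>S\<^esub> a"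
      using a by (simp add: r_minus)
    ultimately show ?thesis by simp
  qed
  have "subgroup J (add_monoid S)"
    apply (rule group.subgroupI[OF a_group])
    using sub z add neg by (auto simp: a_inv_def[symmetric])
  then show ?thesis unfolding right_ideal_def using mul additive_subgroupI by blast
qed

lemma right_idealD:
  assumes "right_ideal S J"
  shows "J \<subseteq> carrier S" "\<zero>\<^bsub>S\<^esub> \<in> J" "\<And>a b. a \<in> J \<Longrightarrow> b \<in> J \<Longrightarrow> a \<oplus>\<^bsub>S\<^esub> b \<in> J"
    "\<And>a. a \<in> J \<Longrightarrow> \<ominus>\<^bsub>S\<^esub> a \<in> J"
    "\<And>a x. a \<in> J \<Longrightarrow> x \<in> carrier S \<Longrightarrow> a \<otimes>\<^bsub>S\<^esub> x \<in> J"
  using assms unfolding right_ideal_def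
  by (auto dest: additive_subgroup.a_subset additive_subgroup.a_closed
      additive_subgroup.zero_closed additive_subgroup.a_inv_closed)

lemma gen_right_ideal_min:
  "right_ideal S L \<Longrightarrow> Y \<subseteq> L \<Longrightarrow> gen_right_ideal S Y \<subseteq> L"
  unfolding gen_right_ideal_def by blast

lemma gen_right_ideal_ideal:
  assumes R: "ring S" and Y: "Y \<subseteq> carrier S"
  shows "right_ideal S (gen_right_ideal S Y)" "Y \<subseteq> gen_right_ideal S Y"
proof -
  interpret ring S by (rule R)
  have car: "right_ideal S (carrier S)"
    by (rule right_idealI'[OF R]) auto
  show "Y \<subseteq> gen_right_ideal S Y" unfolding gen_right_ideal_def by blast
  show "right_ideal S (gen_right_ideal S Y)"
  proof (rule right_idealI'[OF R])
    show "gen_right_ideal S Y \<subseteq> carrier S" using gen_right_ideal_min[OF car Y] .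
    show "\<zero>\<^bsub>S\<^esub> \<in> gen_right_ideal S Y" unfolding gen_right_ideal_def
    proof (intro CollectI allI impI)
      fix L assume "right_ideal S L \<and> Y \<subseteq> L"
      then show "\<zero>\<^bsub>S\<^esub> \<in> L" using right_idealD(2)[of S L] by simp
    qed
    show "a \<oplus>\<^bsub>S\<^esub> b \<in> gen_right_ideal S Y" if a: "a \<in> gen_right_ideal S Y" and b: "b \<in> gen_right_ideal S Y" for a b
      unfolding gen_right_ideal_def
    proof (intro CollectI allI impI)
      fix L assume L: "right_ideal S L \<and> Y \<subseteq> L"
      have "a \<in> L" "b \<in> L" using a b L unfolding gen_right_ideal_def by auto
      then show "a \<oplus>\<^bsub>S\<^esub> b \<in> L" using right_idealD(3)[OF conjunct1[OF L]] by blast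
    qed
    show "a \<otimes>\<^bsub>S\<^esub> x \<in> gen_right_ideal S Y" if a: "a \<in> gen_right_ideal S Y" and x: "x \<in> carrier S" for a x
      unfolding gen_right_ideal_def
    proof (intro CollectI allI impI)
      fix L assume L: "right_ideal S L \<and> Y \<subseteq> L"
      have "a \<in> L" using a L unfolding gen_right_ideal_def by auto
      then show "a \<otimes>\<^bsub>S\<^esub> x \<in> L" using right_idealD(5)[OF conjunct1[OF L]] x by blast
    qed
  qed
qed

lemma image_right_ideal:
  assumes RR: "ring R" and RQ: "ring Q" and hom: "h \<in> ring_hom R Q"
    and surj: "h ` carrier R = carrier Q" and J: "right_ideal R J"
  shows "right_ideal Q (h ` J)"
proof (rule right_idealI'[OF RQ])
  have Jc: "J \<subseteq> carrier R" using right_idealD(1)[OF J] .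
  show "h ` J \<subseteq> carrier Q" using Jc ring_hom_closed[OF hom] by blast
  have "h \<zero>\<^bsub>R\<^esub> = \<zero>\<^bsub>Q\<^esub>" by (rule ring_hom_zero[OF hom RR RQ])
  then show "\<zero>\<^bsub>Q\<^esub> \<in> h ` J" using right_idealD(2)[OF J] by force
  fix a b assume a: "a \<in> h ` J"
  then obtain x where x: "x \<in> J" "a = h x" by blast
  {
    assume "b \<in> h ` J"
    then obtain y where y: "y \<in> J" "b = h y" by blast
    have "a \<oplus>\<^bsub>Q\<^esub> b = h (x \<oplus>\<^bsub>R\<^esub> y)"
      using x y Jc by (simp add: ring_hom_add[OF hom] subset_iff)
    then show "a \<oplus>\<^bsub>Q\<^esub> b \<in> h ` J" using right_idealD(3)[OF J x(1) y(1)] by blast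
  }
  {
    assume "b \<in> carrier Q"
    then obtain y where y: "y \<in> carrier R" "b = h y" using surj by blast
    have "a \<otimes>\<^bsub>Q\<^esub> b = h (x \<otimes>\<^bsub>R\<^esub> y)"
      using x y Jc by (simp add: ring_hom_mult[OF hom] subset_iff)
    then show "a \<otimes>\<^bsub>Q\<^esub> b \<in> h ` J" using right_idealD(5)[OF J x(1) y(1)] by blast
  }
qed

lemma vimage_right_ideal:
  assumes RR: "ring R" and RQ: "ring Q" and hom: "h \<in> ring_hom R Q"
    and L: "right_ideal Q L"
  shows "right_ideal R {x \<in> carrier R. h x \<in> L}"
proof (rule right_idealI'[OF RR])
  show "{x \<in> carrier R. h x \<in> L} \<subseteq> carrier R" by blast
  have "h \<zero>\<^bsub>R\<^esub> = \<zero>\<^bsub>Q\<^esub>" by (rule ring_hom_zero[OF hom RR RQ])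
  then show "\<zero>\<^bsub>R\<^esub> \<in> {x \<in> carrier R. h x \<in> L}"
    using right_idealD(2)[OF L] ring.ring_simprules(2)[OF RR] by auto
  fix a b assume a: "a \<in> {x \<in> carrier R. h x \<in> L}"
  {
    assume b: "b \<in> {x \<in> carrier R. h x \<in> L}"
    have "h (a \<oplus>\<^bsub>R\<^esub> b) = h a \<oplus>\<^bsub>Q\<^esub> h b"
      using ring_hom_add[OF hom] a b by auto
    then show "a \<oplus>\<^bsub>R\<^esub> b \<in> {x \<in> carrier R. h x \<in> L}"
      using right_idealD(3)[OF L] a b ring.ring_simprules(1)[OF RR] by auto
  }
  {
    assume b: "b \<in> carrier R"
    have "h (a \<otimes>\<^bsub>R\<^esub> b) = h a \<otimes>\<^bsub>Q\<^esub> h b"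
      using ring_hom_mult[OF hom] a b by auto
    then show "a \<otimes>\<^bsub>R\<^esub> b \<in> {x \<in> carrier R. h x \<in> L}"
      using right_idealD(5)[OF L] a b ring.ring_simprules(5)[OF RR] ring_hom_closed[OF hom b] by auto
  }
qed

lemma gen_image:
  assumes RR: "ring R" and RQ: "ring Q" and hom: "h \<in> ring_hom R Q"
    and surj: "h ` carrier R = carrier Q" and Y: "Y \<subseteq> carrier R"
  shows "gen_right_ideal Q (h ` Y) = h ` gen_right_ideal R Y"
proof
  have "right_ideal Q (h ` gen_right_ideal R Y)"
    by (rule image_right_ideal[OF RR RQ hom surj gen_right_ideal_ideal(1)[OF RR Y]])
  moreover have "h ` Y \<subseteq> h ` gen_right_ideal R Y"
    using gen_right_ideal_ideal(2)[OF RR Y] by blast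
  ultimately show "gen_right_ideal Q (h ` Y) \<subseteq> h ` gen_right_ideal R Y"
    by (rule gen_right_ideal_min)
  show "h ` gen_right_ideal R Y \<subseteq> gen_right_ideal Q (h ` Y)"
  proof
    fix z assume "z \<in> h ` gen_right_ideal R Y"
    then obtain y where y: "y \<in> gen_right_ideal R Y" "z = h y" by blast
    show "z \<in> gen_right_ideal Q (h ` Y)"
      unfolding gen_right_ideal_def
    proof (intro CollectI allI impI, elim conjE)
      fix L assume L: "right_ideal Q L" "h ` Y \<subseteq> L"
      have "gen_right_ideal R Y \<subseteq> {x \<in> carrier R. h x \<in> L}"
        apply (rule gen_right_ideal_min[OF vimage_right_ideal[OF RR RQ hom L(1)]])
        using L(2) Y by blast
      then show "z \<in> L" using y by blast
    qed
  qed
qed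

lemma (in ideal) quot_carrier: "carrier (R Quot I) = (\<lambda>x. I +> x) ` carrier R"
  by (auto simp: FactRing_def A_RCOSETS_def')

lemma (in ideal) rcos_self: "x \<in> carrier R \<Longrightarrow> x \<in> I +> x"
  using a_rcosI[of \<zero> I x] a_subset by simp

lemma (in ideal) rcos_mem: "y \<in> I +> x \<Longrightarrow> \<exists>h\<in>I. y = h \<oplus> x"
  by (auto simp: a_r_coset_def')

lemma (in ideal) rcos_repr: "x \<in> carrier R \<Longrightarrow> y \<in> I +> x \<Longrightarrow> I +> y = I +> x"
  using a_repr_independence[OF _ _ a_subgroup] by metis

lemma (in ideal) rcos_some: "x \<in> carrier R \<Longrightarrow> (SOME r. r \<in> I +> x) \<in> I +> x"
  using rcos_self by (rule someI)

lemma (in ideal) rcos_carrier: "x \<in> carrier R \<Longrightarrow> y \<in> I +> x \<Longrightarrow> y \<in> carrier R"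
  using a_r_coset_subset_G[OF a_subset] by blast

lemma rmD:
  assumes "right_module S M act"
  shows "ring S" "abelian_group M"
    "\<And>m r. m \<in> carrier M \<Longrightarrow> r \<in> carrier S \<Longrightarrow> act m r \<in> carrier M"
    "\<And>m n r. m \<in> carrier M \<Longrightarrow> n \<in> carrier M \<Longrightarrow> r \<in> carrier S \<Longrightarrow> act (m \<oplus>\<^bsub>M\<^esub> n) r = act m r \<oplus>\<^bsub>M\<^esub> act n r"
    "\<And>m r s. m \<in> carrier M \<Longrightarrow> r \<in> carrier S \<Longrightarrow> s \<in> carrier S \<Longrightarrow> act m (r \<oplus>\<^bsub>S\<^esub> s) = act m r \<oplus>\<^bsub>M\<^esub> act m s"
    "\<And>m r s. m \<in> carrier M \<Longrightarrow> r \<in> carrier S \<Longrightarrow> s \<in> carrier S \<Longrightarrow> act m (r \<otimes>\<^bsub>S\<^esub> s) = act (act m r) s"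
    "\<And>m. m \<in> carrier M \<Longrightarrow> act m \<one>\<^bsub>S\<^esub> = m"
  using assms unfolding right_module_def by auto

lemma annD: "I \<subseteq> annihilator R M act \<Longrightarrow> h \<in> I \<Longrightarrow> m \<in> carrier M \<Longrightarrow> act m h = \<zero>\<^bsub>M\<^esub>"
  unfolding annihilator_def by blast

lemma act_coset:
  assumes I: "ideal I R" and M: "right_module R M act" and ann: "I \<subseteq> annihilator R M act"
    and m: "m \<in> carrier M" and r: "r \<in> carrier R" and s: "s \<in> I +>\<^bsub>R\<^esub> r"
  shows "act m s = act m r"
proof -
  interpret ideal I R by (rule I)
  interpret MM: abelian_group M by (rule rmD(2)[OF M])
  obtain h where h: "h \<in> I" "s = h \<oplus>\<^bsub>R\<^esub> r" using rcos_mem[OF s] by blast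
  have hc: "h \<in> carrier R" using h(1) a_subset by blast
  have "act m s = act m h \<oplus>\<^bsub>M\<^esub> act m r" using h(2) rmD(5)[OF M m hc r] by simp
  also have "\<dots> = act m r" using annD[OF ann h(1) m] rmD(3)[OF M m r] by simp
  finally show ?thesis .
qed

lemma quot_act_eq:
  assumes I: "ideal I R" and M: "right_module R M act" and ann: "I \<subseteq> annihilator R M act"
    and m: "m \<in> carrier M" and r: "r \<in> carrier R"
  shows "quot_act act m (I +>\<^bsub>R\<^esub> r) = act m r"
  unfolding quot_act_def
  by (rule act_coset[OF I M ann m r ideal.rcos_some[OF I r]])

lemma hom_coset:
  assumes I: "ideal I R" and M: "right_module R M act" and ann: "I \<subseteq> annihilator R M act"
    and h: "rmod_hom R M act (carrier R) g" and r: "r \<in> carrier R" and s: "s \<in> I +>\<^bsub>R\<^esub> r"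
  shows "g s = g r"
proof -
  interpret ideal I R by (rule I)
  interpret MM: abelian_group M by (rule rmD(2)[OF M])
  obtain k where k: "k \<in> I" "s = k \<oplus>\<^bsub>R\<^esub> r" using rcos_mem[OF s] by blast
  have kc: "k \<in> carrier R" using k(1) a_subset by blast
  have g1: "g \<one>\<^bsub>R\<^esub> \<in> carrier M" using h unfolding rmod_hom_def by simp
  have "g k = g (\<one>\<^bsub>R\<^esub> \<otimes>\<^bsub>R\<^esub> k)" using kc by simp
  also have "\<dots> = act (g \<one>\<^bsub>R\<^esub>) k" using h kc one_closed unfolding rmod_hom_def by blast
  also have "\<dots> = \<zero>\<^bsub>M\<^esub>" using annD[OF ann k(1) g1] .
  finally have gk: "g k = \<zero>\<^bsub>M\<^esub>" .
  have "g s = g k \<oplus>\<^bsub>M\<^esub> g r" using h kc r k(2) unfolding rmod_hom_def by simp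
  also have "\<dots> = g r" using gk h r unfolding rmod_hom_def by simp
  finally show ?thesis .
qed

lemma surjE: "f ` A = B \<Longrightarrow> y \<in> B \<Longrightarrow> (\<And>x. x \<in> A \<Longrightarrow> y = f x \<Longrightarrow> P) \<Longrightarrow> P"
  by blast

lemma dir1:
  assumes I: "ideal I R" and M: "right_module R M act" and ann: "I \<subseteq> annihilator R M act"
    and inj: "aleph0_injective R M act"
  shows "aleph0_injective (R Quot I) M (quot_act act)"
  unfolding aleph0_injective_def
proof (intro allI impI, elim conjE)
  interpret ideal I R by (rule I)
  interpret MM: abelian_group M by (rule rmD(2)[OF M])
  define Q where "Q = R Quot I"
  define \<pi> where "\<pi> = (\<lambda>x. I +>\<^bsub>R\<^esub> x)"
  have RQ: "ring Q" unfolding Q_def by (rule quotient_is_ring)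
  have RR: "ring R" by (rule ring_axioms)
  have hom: "\<pi> \<in> ring_hom R Q" unfolding Q_def \<pi>_def using rcos_ring_hom by simp
  have surj: "\<pi> ` carrier R = carrier Q" unfolding Q_def \<pi>_def by (simp add: quot_carrier)
  have qa: "\<And>m r. m \<in> carrier M \<Longrightarrow> r \<in> carrier R \<Longrightarrow> quot_act act m (\<pi> r) = act m r"
    unfolding \<pi>_def by (rule quot_act_eq[OF I M ann])
  fix Jb fb
  assume cg: "countably_generated_right_ideal (R Quot I) Jb"
    and fbh: "rmod_hom (R Quot I) M (quot_act act) Jb fb"
  have "\<exists>Yb. countable Yb \<and> Yb \<subseteq> carrier Q \<and> Jb = gen_right_ideal Q Yb"
    using cg unfolding countably_generated_right_ideal_def Q_def by (rule conjunct2)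
  then obtain Yb where Yb: "countable Yb" "Yb \<subseteq> carrier Q" "Jb = gen_right_ideal Q Yb"
    by blast
  define rep where "rep C = (SOME r. r \<in> C)" for C :: "'a set"
  have rep: "rep C \<in> carrier R \<and> \<pi> (rep C) = C" if Cq: "C \<in> carrier Q" for C
  proof -
    obtain x where x: "x \<in> carrier R" "C = \<pi> x" by (rule surjE[OF surj Cq])
    have "rep C \<in> I +>\<^bsub>R\<^esub> x" unfolding rep_def x(2) \<pi>_def by (rule rcos_some[OF x(1)])
    then show ?thesis using rcos_carrier[OF x(1)] rcos_repr[OF x(1)] x(2) unfolding \<pi>_def by auto
  qed
  define Y where "Y = rep ` Yb"
  have Ysub: "Y \<subseteq> carrier R" using rep Yb(2) unfolding Y_def by blast
  have Ycount: "countable Y" unfolding Y_def using Yb(1) by simp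
  have piY: "\<pi> ` Y = Yb" unfolding Y_def using rep Yb(2) by (force simp: image_image)
  define J where "J = gen_right_ideal R Y"
  have JR: "right_ideal R J" unfolding J_def by (rule gen_right_ideal_ideal(1)[OF RR Ysub])
  have piJ: "\<pi> ` J = Jb" unfolding J_def Yb(3) piY[symmetric]
    by (rule gen_image[OF RR RQ hom surj Ysub, symmetric])
  have Jc: "J \<subseteq> carrier R" by (rule right_idealD(1)[OF JR])
  define g where "g x = fb (\<pi> x)" for x
  have fbh': "\<forall>x\<in>Jb. fb x \<in> carrier M"
      "\<forall>x\<in>Jb. \<forall>y\<in>Jb. fb (x \<oplus>\<^bsub>Q\<^esub> y) = fb x \<oplus>\<^bsub>M\<^esub> fb y"
      "\<forall>x\<in>Jb. \<forall>r\<in>carrier Q. fb (x \<otimes>\<^bsub>Q\<^esub> r) = quot_act act (fb x) r"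
    using fbh unfolding rmod_hom_def Q_def by auto
  have gh: "rmod_hom R M act J g"
    unfolding rmod_hom_def
  proof (intro conjI ballI)
    fix x assume x: "x \<in> J"
    then have xb: "\<pi> x \<in> Jb" using piJ by blast
    have xc: "x \<in> carrier R" using x Jc by blast
    show "g x \<in> carrier M" unfolding g_def using fbh'(1) xb by blast
    {
      fix y assume y: "y \<in> J"
      then have yb: "\<pi> y \<in> Jb" using piJ by blast
      have yc: "y \<in> carrier R" using y Jc by blast
      show "g (x \<oplus>\<^bsub>R\<^esub> y) = g x \<oplus>\<^bsub>M\<^esub> g y"
        unfolding g_def using ring_hom_add[OF hom xc yc] fbh'(2) xb yb by simp
    }
    {
      fix r assume r: "r \<in> carrier R"
      have "g (x \<otimes>\<^bsub>R\<^esub> r) = fb (\<pi> x \<otimes>\<^bsub>Q\<^esub> \<pi> r)"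
        unfolding g_def using ring_hom_mult[OF hom xc r] by simp
      also have "\<dots> = quot_act act (fb (\<pi> x)) (\<pi> r)"
        using fbh'(3) xb ring_hom_closed[OF hom r] by blast
      also have "\<dots> = act (g x) r" unfolding g_def
        using qa[OF _ r] fbh'(1) xb by blast
      finally show "g (x \<otimes>\<^bsub>R\<^esub> r) = act (g x) r" .
    }
  qed
  have "countably_generated_right_ideal R J"
    unfolding countably_generated_right_ideal_def using JR Ycount Ysub J_def by blast
  then obtain h where h: "rmod_hom R M act (carrier R) h" "\<forall>x\<in>J. h x = g x"
    using inj gh unfolding aleph0_injective_def by blast
  have hh: "\<forall>x\<in>carrier R. h x \<in> carrier M"
      "\<forall>x\<in>carrier R. \<forall>y\<in>carrier R. h (x \<oplus>\<^bsub>R\<^esub> y) = h x \<oplus>\<^bsub>M\<^esub> h y"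
      "\<forall>x\<in>carrier R. \<forall>r\<in>carrier R. h (x \<otimes>\<^bsub>R\<^esub> r) = act (h x) r"
    using h(1) unfolding rmod_hom_def by auto
  define gb where "gb C = h (rep C)" for C
  have gbpi: "gb (\<pi> x) = h x" if x: "x \<in> carrier R" for x
  proof -
    have "rep (\<pi> x) \<in> I +>\<^bsub>R\<^esub> x" unfolding rep_def \<pi>_def by (rule rcos_some[OF x])
    then show ?thesis unfolding gb_def using hom_coset[OF I M ann h(1) x] by blast
  qed
  have "rmod_hom Q M (quot_act act) (carrier Q) gb"
    unfolding rmod_hom_def
  proof (intro conjI ballI)
    fix C assume "C \<in> carrier Q"
    then obtain x where x: "x \<in> carrier R" "C = \<pi> x" using surj by blast
    show "gb C \<in> carrier M" using gbpi[OF x(1)] hh(1) x by simp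
    {
      fix D assume "D \<in> carrier Q"
      then obtain y where y: "y \<in> carrier R" "D = \<pi> y" using surj by blast
      have "C \<oplus>\<^bsub>Q\<^esub> D = \<pi> (x \<oplus>\<^bsub>R\<^esub> y)" using ring_hom_add[OF hom x(1) y(1)] x y by simp
      then show "gb (C \<oplus>\<^bsub>Q\<^esub> D) = gb C \<oplus>\<^bsub>M\<^esub> gb D"
        using gbpi x y hh(2) by simp
    }
    {
      fix D assume "D \<in> carrier Q"
      then obtain y where y: "y \<in> carrier R" "D = \<pi> y" using surj by blast
      have "C \<otimes>\<^bsub>Q\<^esub> D = \<pi> (x \<otimes>\<^bsub>R\<^esub> y)" using ring_hom_mult[OF hom x(1) y(1)] x y by simp
      then have "gb (C \<otimes>\<^bsub>Q\<^esub> D) = act (h x) y" using gbpi x y hh(3) by simp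
      also have "\<dots> = quot_act act (gb C) D" using qa[OF _ y(1)] hh(1) x y gbpi by simp
      finally show "gb (C \<otimes>\<^bsub>Q\<^esub> D) = quot_act act (gb C) D" .
    }
  qed
  moreover have "\<forall>C\<in>Jb. gb C = fb C"
  proof
    fix C assume "C \<in> Jb"
    then obtain x where x: "x \<in> J" "C = \<pi> x" using piJ by blast
    have xc: "x \<in> carrier R" using x Jc by blast
    show "gb C = fb C" using gbpi[OF xc] h(2) x unfolding g_def by simp
  qed
  ultimately show "\<exists>g. rmod_hom (R Quot I) M (quot_act act) (carrier (R Quot I)) g \<and> (\<forall>x\<in>Jb. g x = fb x)"
    unfolding Q_def by blast
qed

lemma fi_kill:
  assumes I: "ideal I R" and M: "right_module R M act" and ann: "I \<subseteq> annihilator R M act"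
    and fi: "right_fully_idempotent R" and JR: "right_ideal R J"
    and f: "rmod_hom R M act J f" and xJ: "x \<in> J" and xI: "x \<in> I"
  shows "f x = \<zero>\<^bsub>M\<^esub>"
proof -
  interpret ideal I R by (rule I)
  interpret MM: abelian_group M by (rule rmD(2)[OF M])
  have Jc: "J \<subseteq> carrier R" by (rule right_idealD(1)[OF JR])
  have fh: "\<forall>x\<in>J. f x \<in> carrier M"
      "\<forall>x\<in>J. \<forall>y\<in>J. f (x \<oplus>\<^bsub>R\<^esub> y) = f x \<oplus>\<^bsub>M\<^esub> f y"
      "\<forall>x\<in>J. \<forall>r\<in>carrier R. f (x \<otimes>\<^bsub>R\<^esub> r) = act (f x) r"
    using f unfolding rmod_hom_def by auto
  have Isub: "I \<subseteq> carrier R" by (rule a_subset)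
  have z0: "\<zero>\<^bsub>R\<^esub> \<in> I" using additive_subgroup.zero_closed[OF is_additive_subgroup] .
  have zJ: "\<zero>\<^bsub>R\<^esub> \<in> J" by (rule right_idealD(2)[OF JR])
  have f0: "f \<zero>\<^bsub>R\<^esub> = \<zero>\<^bsub>M\<^esub>"
  proof -
    have "f \<zero>\<^bsub>R\<^esub> = f (\<zero>\<^bsub>R\<^esub> \<otimes>\<^bsub>R\<^esub> \<zero>\<^bsub>R\<^esub>)" by simp
    also have "\<dots> = act (f \<zero>\<^bsub>R\<^esub>) \<zero>\<^bsub>R\<^esub>" using fh(3) zJ by blast
    also have "\<dots> = \<zero>\<^bsub>M\<^esub>" using annD[OF ann z0] fh(1) zJ by blast
    finally show ?thesis .
  qed
  define K where "K = J \<inter> I"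
  have KR: "right_ideal R K" unfolding K_def
  proof (rule right_idealI'[OF ring_axioms])
    show "J \<inter> I \<subseteq> carrier R" using Jc by blast
    show "\<zero>\<^bsub>R\<^esub> \<in> J \<inter> I" using zJ z0 by blast
    show "a \<oplus>\<^bsub>R\<^esub> b \<in> J \<inter> I" if "a \<in> J \<inter> I" "b \<in> J \<inter> I" for a b
      using that right_idealD(3)[OF JR] additive_subgroup.a_closed[OF is_additive_subgroup] by blast
    show "a \<otimes>\<^bsub>R\<^esub> y \<in> J \<inter> I" if "a \<in> J \<inter> I" "y \<in> carrier R" for a y
      using that right_idealD(5)[OF JR] I_r_closed by blast
  qed
  have "x \<in> ideal_square R K" using fi KR xJ xI unfolding right_fully_idempotent_def K_def by blast
  then obtain n a b where ab: "\<forall>i<(n::nat). a i \<in> K \<and> b i \<in> K"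
      and xs: "x = finsum R (\<lambda>i. a i \<otimes>\<^bsub>R\<^esub> b i) {..<n}"
    unfolding ideal_square_def by blast
  have "\<forall>i<m. a i \<in> K \<and> b i \<in> K \<Longrightarrow>
      finsum R (\<lambda>i. a i \<otimes>\<^bsub>R\<^esub> b i) {..<m} \<in> J \<and> f (finsum R (\<lambda>i. a i \<otimes>\<^bsub>R\<^esub> b i) {..<m}) = \<zero>\<^bsub>M\<^esub>" for m
  proof (induction m)
    case 0
    then show ?case using zJ f0 by simp
  next
    case (Suc m)
    have ab': "a i \<in> J" "b i \<in> I" "a i \<in> carrier R" "b i \<in> carrier R" if "i \<le> m" for i
      using Suc.prems that Jc Isub unfolding K_def by auto
    have IH: "finsum R (\<lambda>i. a i \<otimes>\<^bsub>R\<^esub> b i) {..<m} \<in> J \<and> f (finsum R (\<lambda>i. a i \<otimes>\<^bsub>R\<^esub> b i) {..<m}) = \<zero>\<^bsub>M\<^esub>"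
      using Suc.IH Suc.prems by simp
    have fc: "(\<lambda>i. a i \<otimes>\<^bsub>R\<^esub> b i) \<in> {..<m} \<rightarrow> carrier R" using ab' by auto
    have eq: "finsum R (\<lambda>i. a i \<otimes>\<^bsub>R\<^esub> b i) {..<Suc m} =
        a m \<otimes>\<^bsub>R\<^esub> b m \<oplus>\<^bsub>R\<^esub> finsum R (\<lambda>i. a i \<otimes>\<^bsub>R\<^esub> b i) {..<m}"
      unfolding lessThan_Suc using finsum_insert[OF _ _ fc] ab'[of m] by simp
    have t1: "a m \<otimes>\<^bsub>R\<^esub> b m \<in> J" using right_idealD(5)[OF JR] ab'[of m] by simp
    have t2: "f (a m \<otimes>\<^bsub>R\<^esub> b m) = \<zero>\<^bsub>M\<^esub>"
      using fh(3) ab'[of m] annD[OF ann, of "b m" "f (a m)"] fh(1) by simp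
    show ?case
    proof
      show "finsum R (\<lambda>i. a i \<otimes>\<^bsub>R\<^esub> b i) {..<Suc m} \<in> J"
        unfolding eq using right_idealD(3)[OF JR t1] IH by simp
      have "f (finsum R (\<lambda>i. a i \<otimes>\<^bsub>R\<^esub> b i) {..<Suc m}) = \<zero>\<^bsub>M\<^esub> \<oplus>\<^bsub>M\<^esub> \<zero>\<^bsub>M\<^esub>"
        unfolding eq using fh(2) t1 IH t2 by simp
      then show "f (finsum R (\<lambda>i. a i \<otimes>\<^bsub>R\<^esub> b i) {..<Suc m}) = \<zero>\<^bsub>M\<^esub>" by simp
    qed
  qed
  then show ?thesis using ab xs by simp
qed

lemma dir2:
  assumes I: "ideal I R" and M: "right_module R M act" and ann: "I \<subseteq> annihilator R M act"
    and fi: "right_fully_idempotent R"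
    and inj: "aleph0_injective (R Quot I) M (quot_act act)"
  shows "aleph0_injective R M act"
  unfolding aleph0_injective_def
proof (intro allI impI, elim conjE)
  interpret ideal I R by (rule I)
  interpret MM: abelian_group M by (rule rmD(2)[OF M])
  define Q where "Q = R Quot I"
  define \<pi> where "\<pi> = (\<lambda>x. I +>\<^bsub>R\<^esub> x)"
  have RQ: "ring Q" unfolding Q_def by (rule quotient_is_ring)
  have RR: "ring R" by (rule ring_axioms)
  have hom: "\<pi> \<in> ring_hom R Q" unfolding Q_def \<pi>_def using rcos_ring_hom by simp
  have surj: "\<pi> ` carrier R = carrier Q" unfolding Q_def \<pi>_def by (simp add: quot_carrier)
  have qa: "\<And>m r. m \<in> carrier M \<Longrightarrow> r \<in> carrier R \<Longrightarrow> quot_act act m (\<pi> r) = act m r"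
    unfolding \<pi>_def by (rule quot_act_eq[OF I M ann])
  fix J f
  assume cg: "countably_generated_right_ideal R J"
    and fh0: "rmod_hom R M act J f"
  have JR: "right_ideal R J" using cg unfolding countably_generated_right_ideal_def by (rule conjunct1)
  have "\<exists>Y. countable Y \<and> Y \<subseteq> carrier R \<and> J = gen_right_ideal R Y"
    using cg unfolding countably_generated_right_ideal_def by (rule conjunct2)
  then obtain Y where Y: "countable Y" "Y \<subseteq> carrier R" "J = gen_right_ideal R Y"
    by blast
  have Jc: "J \<subseteq> carrier R" by (rule right_idealD(1)[OF JR])
  have fh: "\<forall>x\<in>J. f x \<in> carrier M"
      "\<forall>x\<in>J. \<forall>y\<in>J. f (x \<oplus>\<^bsub>R\<^esub> y) = f x \<oplus>\<^bsub>M\<^esub> f y"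
      "\<forall>x\<in>J. \<forall>r\<in>carrier R. f (x \<otimes>\<^bsub>R\<^esub> r) = act (f x) r"
    using fh0 unfolding rmod_hom_def by auto
  define Jb where "Jb = \<pi> ` J"
  have JbR: "right_ideal Q Jb" unfolding Jb_def by (rule image_right_ideal[OF RR RQ hom surj JR])
  have Jbgen: "Jb = gen_right_ideal Q (\<pi> ` Y)" unfolding Jb_def Y(3)
    by (rule gen_image[OF RR RQ hom surj Y(2), symmetric])
  have cgb: "countably_generated_right_ideal Q Jb"
    unfolding countably_generated_right_ideal_def
    using JbR Jbgen Y(1) Y(2) ring_hom_closed[OF hom] by blast
  have wd: "f x' = f x" if x: "x \<in> J" and x': "x' \<in> J" and e: "\<pi> x' = \<pi> x" for x x'
  proof -
    have xc: "x \<in> carrier R" and x'c: "x' \<in> carrier R" using x x' Jc by auto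
    have "x' \<in> I +>\<^bsub>R\<^esub> x" using rcos_self[OF x'c] e unfolding \<pi>_def by simp
    then obtain k where k: "k \<in> I" "x' = k \<oplus>\<^bsub>R\<^esub> x" using rcos_mem by blast
    have kc: "k \<in> carrier R" using k(1) a_subset by blast
    have "k = x' \<oplus>\<^bsub>R\<^esub> (\<ominus>\<^bsub>R\<^esub> x)" using k(2) kc xc by (simp add: a_assoc r_neg)
    then have kJ: "k \<in> J" using right_idealD(3)[OF JR x' right_idealD(4)[OF JR x]] by simp
    have fk: "f k = \<zero>\<^bsub>M\<^esub>" by (rule fi_kill[OF I M ann fi JR fh0 kJ k(1)])
    have "f x' = f k \<oplus>\<^bsub>M\<^esub> f x" using k(2) fh(2) kJ x by simp
    then show ?thesis using fk fh(1) x by simp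
  qed
  define fb where "fb C = f (SOME x. x \<in> J \<and> \<pi> x = C)" for C
  have fbpi: "fb (\<pi> x) = f x" if x: "x \<in> J" for x
  proof -
    have "\<exists>y. y \<in> J \<and> \<pi> y = \<pi> x" using x by blast
    then have "(SOME y. y \<in> J \<and> \<pi> y = \<pi> x) \<in> J \<and> \<pi> (SOME y. y \<in> J \<and> \<pi> y = \<pi> x) = \<pi> x"
      by (rule someI_ex)
    then show ?thesis unfolding fb_def using wd x by blast
  qed
  have "rmod_hom Q M (quot_act act) Jb fb"
    unfolding rmod_hom_def
  proof (intro conjI ballI)
    fix C assume "C \<in> Jb"
    then obtain x where x: "x \<in> J" "C = \<pi> x" unfolding Jb_def by blast
    have xc: "x \<in> carrier R" using x Jc by blast
    show "fb C \<in> carrier M" using fbpi[OF x(1)] fh(1) x by simp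
    {
      fix D assume "D \<in> Jb"
      then obtain y where y: "y \<in> J" "D = \<pi> y" unfolding Jb_def by blast
      have yc: "y \<in> carrier R" using y Jc by blast
      have "C \<oplus>\<^bsub>Q\<^esub> D = \<pi> (x \<oplus>\<^bsub>R\<^esub> y)" using ring_hom_add[OF hom xc yc] x y by simp
      then show "fb (C \<oplus>\<^bsub>Q\<^esub> D) = fb C \<oplus>\<^bsub>M\<^esub> fb D"
        using fbpi x y fh(2) right_idealD(3)[OF JR x(1) y(1)] by simp
    }
    {
      fix D assume Dq: "D \<in> carrier Q"
      obtain y where y: "y \<in> carrier R" "D = \<pi> y" by (rule surjE[OF surj Dq])
      have "C \<otimes>\<^bsub>Q\<^esub> D = \<pi> (x \<otimes>\<^bsub>R\<^esub> y)" using ring_hom_mult[OF hom xc y(1)] x y by simp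
      then have "fb (C \<otimes>\<^bsub>Q\<^esub> D) = act (f x) y"
        using fbpi x y fh(3) right_idealD(5)[OF JR x(1) y(1)] by simp
      also have "\<dots> = quot_act act (fb C) D" using qa[OF _ y(1)] fh(1) x y fbpi by simp
      finally show "fb (C \<otimes>\<^bsub>Q\<^esub> D) = quot_act act (fb C) D" .
    }
  qed
  then obtain gb where gb: "rmod_hom Q M (quot_act act) (carrier Q) gb" "\<forall>C\<in>Jb. gb C = fb C"
    using inj cgb unfolding aleph0_injective_def Q_def by blast
  have gbh: "\<forall>x\<in>carrier Q. gb x \<in> carrier M"
      "\<forall>x\<in>carrier Q. \<forall>y\<in>carrier Q. gb (x \<oplus>\<^bsub>Q\<^esub> y) = gb x \<oplus>\<^bsub>M\<^esub> gb y"
      "\<forall>x\<in>carrier Q. \<forall>r\<in>carrier Q. gb (x \<otimes>\<^bsub>Q\<^esub> r) = quot_act act (gb x) r"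
    using gb(1) unfolding rmod_hom_def by auto
  define g where "g x = gb (\<pi> x)" for x
  have "rmod_hom R M act (carrier R) g"
    unfolding rmod_hom_def
  proof (intro conjI ballI)
    fix x assume xc: "x \<in> carrier R"
    have xq: "\<pi> x \<in> carrier Q" by (rule ring_hom_closed[OF hom xc])
    show "g x \<in> carrier M" unfolding g_def using gbh(1) xq by blast
    {
      fix y assume yc: "y \<in> carrier R"
      have yq: "\<pi> y \<in> carrier Q" by (rule ring_hom_closed[OF hom yc])
      show "g (x \<oplus>\<^bsub>R\<^esub> y) = g x \<oplus>\<^bsub>M\<^esub> g y"
        unfolding g_def using ring_hom_add[OF hom xc yc] gbh(2) xq yq by simp
    }
    {
      fix r assume r: "r \<in> carrier R"
      have rq: "\<pi> r \<in> carrier Q" by (rule ring_hom_closed[OF hom r])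
      have "g (x \<otimes>\<^bsub>R\<^esub> r) = gb (\<pi> x \<otimes>\<^bsub>Q\<^esub> \<pi> r)"
        unfolding g_def using ring_hom_mult[OF hom xc r] by simp
      also have "\<dots> = quot_act act (gb (\<pi> x)) (\<pi> r)"
        using gbh(3) xq rq by blast
      also have "\<dots> = act (g x) r" unfolding g_def
        using qa[OF _ r] gbh(1) xq by blast
      finally show "g (x \<otimes>\<^bsub>R\<^esub> r) = act (g x) r" .
    }
  qed
  moreover have "\<forall>x\<in>J. g x = f x"
  proof
    fix x assume x: "x \<in> J"
    have "\<pi> x \<in> Jb" unfolding Jb_def using x by blast
    then show "g x = f x" unfolding g_def using gb(2) fbpi[OF x] by simp
  qed
  ultimately show "\<exists>g. rmod_hom R M act (carrier R) g \<and> (\<forall>x\<in>J. g x = f x)" by blast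
qed

theorem proposition1p3:
  fixes R :: "('r, 'c) ring_scheme" and M :: "('m, 'd) ring_scheme"
    and act :: "'m \<Rightarrow> 'r \<Rightarrow> 'm" and I :: "'r set"
  assumes "ring R"
    and "right_module R M act"
    and "ideal I R"
    and "I \<subseteq> annihilator R M act"
  shows "(aleph0_injective R M act \<longrightarrow> aleph0_injective (R Quot I) M (quot_act act))
       \<and> (right_fully_idempotent R \<and> aleph0_injective (R Quot I) M (quot_act act)
           \<longrightarrow> aleph0_injective R M act)"
  using dir1[OF assms(3,2,4)] dir2[OF assms(3,2,4)] by blast

end
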